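(* Let $\mathsf d_Y\le\mathsf d_X$, let $C(\theta_1)$ be a symmetric positive definite $\mathsf d_X\times\mathsf d_X$ matrix depending differentiably on $\theta_1\in\mathbb R^{\mathsf p_1}$, and let $H_x$ be a $\mathsf d_Y\times\mathsf d_X$ matrix with $\mathrm{rank}(H_x)=\mathsf d_Y$; set $V=H_xCH_x^\star$. Then, at any fixed $\theta_1$, $$\mathrm{Tr}\big\{V^{-1}H_x(\partial_1C)H_x^\star V^{-1}H_x(\partial_1C)H_x^\star\big\}\le\mathrm{Tr}\big\{C^{-1}(\partial_1C)C^{-1}\partial_1C\big\}$$ in the partial order of symmetric $\mathsf p_1\times\mathsf p_1$ matrices.
   Context: Here $\star$ denotes transpose and $\partial_1C$ the collection $(\partial_{\theta_{1,k}}C)_{k=1}^{\mathsf p_1}$; for matrices $P,Q$ of matching sizes, $\mathrm{Tr}\{P(\partial_1C)Q\,\partial_1C\}$ denotes the $\mathsf p_1\times\mathsf p_1$ matrix whose $(k,l)$ entry is $\mathrm{Tr}\{P(\partial_{\theta_{1,k}}C)Q\,\partial_{\theta_{1,l}}C\}$ (and analogously for the left-hand side with $H_x(\partial_{\theta_{1,k}}C)H_x^\star$). For symmetric matrices, $M_1\le M_2$ means $M_2-M_1$ is nonnegative definite. In the paper this is applied with $C=C(z,\theta_1^* )$, $H_x=H_x(z,\theta_3^* )$ at each point $z$. *)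

theory Defs
  imports "HOL-Analysis.Analysis"
begin

definition symmetric_mat :: "real^'n^'n \<Rightarrow> bool" where
  "symmetric_mat A \<longleftrightarrow> transpose A = A"

definition pos_def_mat :: "real^'n^'n \<Rightarrow> bool" where
  "pos_def_mat A \<longleftrightarrow> symmetric_mat A \<and> (\<forall>v. v \<noteq> 0 \<longrightarrow> v \<bullet> (A *v v) > 0)"

definition nonneg_def_mat :: "real^'n^'n \<Rightarrow> bool" where
  "nonneg_def_mat A \<longleftrightarrow> symmetric_mat A \<and> (\<forall>v. v \<bullet> (A *v v) \<ge> 0)"

definition loewner_le :: "real^'n^'n \<Rightarrow> real^'n^'n \<Rightarrow> bool" where
  "loewner_le M1 M2 \<longleftrightarrow> symmetric_mat M1 \<and> symmetric_mat M2 \<and> nonneg_def_mat (M2 - M1)"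

text \<open>Partial derivative of a matrix-valued function in direction of the k-th coordinate,
  given its Frechet derivative D.\<close>
definition partial_mat :: "(real^'p \<Rightarrow> real^'x^'x) \<Rightarrow> 'p \<Rightarrow> real^'x^'x" where
  "partial_mat D k = D (axis k 1)"

end

theory Submission
  imports Defs
begin

lemma sym_entry: "symmetric_mat B \<Longrightarrow> B$i$j = B$j$i"
  unfolding symmetric_mat_def by (metis transpose_def vec_lambda_beta)

lemma inner_transpose: "x \<bullet> (A *v y) = (transpose A *v x) \<bullet> (y::real^_)"
  by (simp add: dot_lmul_matrix)

lemma sym_inner: "symmetric_mat A \<Longrightarrow> (A *v x) \<bullet> y = x \<bullet> (A *v (y::real^_))"
  by (metis inner_transpose symmetric_mat_def)

lemma axis_quad: "axis i 1 \<bullet> ((B::real^'n^'n) *v axis j 1) = B$i$j"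
  by (simp add: matrix_vector_mult_basis inner_axis' column_def)

lemma mat_scaleR_right: "(A::real^'n^'m) ** (c *\<^sub>R M) = c *\<^sub>R (A ** M)"
  by (simp add: matrix_matrix_mult_def vec_eq_iff sum_distrib_left mult_ac)

lemma trace_scaleR: "trace (c *\<^sub>R (M::real^'n^'n)) = c * trace M"
  by (simp add: trace_def sum_distrib_left)

definition outer :: "real^'n \<Rightarrow> real^'n^'n" where "outer b = (\<chi> i j. b$i * b$j)"

lemma outer_mv: "outer b *v v = (b \<bullet> v) *\<^sub>R b"
  by (simp add: outer_def vec_eq_iff matrix_vector_mult_def inner_vec_def sum_distrib_left mult_ac)

lemma trace_outer: "trace (A ** outer b) = b \<bullet> (A *v b)"
  by (simp add: outer_def trace_def matrix_matrix_mult_def matrix_vector_mult_def inner_vec_def sum_distrib_left mult_ac)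

lemma quad_two: "(t *\<^sub>R axis k 1 + axis j 1) \<bullet> ((B::real^'n^'n) *v (t *\<^sub>R axis k 1 + axis j 1))
   = t*t*B$k$k + t*B$k$j + t*B$j$k + B$j$j"
  by (simp add: matrix_vector_right_distrib matrix_vector_mult_scaleR inner_add_left inner_add_right axis_quad algebra_simps)

lemma psd_zero_diag:
  assumes "nonneg_def_mat (B::real^'n^'n)" "B$k$k = 0"
  shows "B$k$j = 0"
proof (rule ccontr)
  assume ne: "B$k$j \<noteq> 0"
  then have jk: "j \<noteq> k" using assms(2) by auto
  have s: "B$j$k = B$k$j" using assms(1) sym_entry nonneg_def_mat_def by metis
  define t where "t = - (B$j$j + 1) / (2 * B$k$j)"
  have "0 \<le> (t *\<^sub>R axis k 1 + axis j 1) \<bullet> (B *v (t *\<^sub>R axis k 1 + axis j 1))"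
    using assms(1) nonneg_def_mat_def by blast
  also have "\<dots> = 2 * t * B$k$j + B$j$j" unfolding quad_two using assms(2) s by simp
  also have "\<dots> = -1" unfolding t_def using ne by (simp add: field_simps)
  finally show False by simp
qed

lemma psd_trace_supp:
  fixes A :: "real^'n^'n"
  assumes A: "nonneg_def_mat A" and I: "finite I"
  shows "\<forall>B. nonneg_def_mat B \<and> (\<forall>i j. i \<notin> I \<or> j \<notin> I \<longrightarrow> B$i$j = 0) \<longrightarrow> trace (A ** B) \<ge> 0"
  using I
proof (induction I rule: finite_induct)
  case empty
  then show ?case
  proof (intro allI impI)
    fix B :: "real^'n^'n" assume "nonneg_def_mat B \<and> (\<forall>i j. i \<notin> {} \<or> j \<notin> {} \<longrightarrow> B$i$j = 0)"
    then have "B = 0" by (simp add: vec_eq_iff)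
    then show "trace (A ** B) \<ge> 0" by (simp add: trace_def)
  qed
next
  case (insert k I)
  show ?case
  proof (intro allI impI)
    fix B :: "real^'n^'n"
    assume hB: "nonneg_def_mat B \<and> (\<forall>i j. i \<notin> insert k I \<or> j \<notin> insert k I \<longrightarrow> B$i$j = 0)"
    then have psd: "nonneg_def_mat B" and sup: "\<And>i j. i \<notin> insert k I \<or> j \<notin> insert k I \<Longrightarrow> B$i$j = 0"
      by auto
    have symB: "symmetric_mat B" using psd nonneg_def_mat_def by blast
    have dpos: "B$k$k \<ge> 0" using psd unfolding nonneg_def_mat_def by (metis axis_quad)
    show "trace (A ** B) \<ge> 0"
    proof (cases "B$k$k = 0")
      case True
      have "B$k$j = 0" for j using psd_zero_diag[OF psd True] .
      moreover have "B$j$k = 0" for j using psd_zero_diag[OF psd True] sym_entry[OF symB] by metis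
      ultimately have "\<forall>i j. i \<notin> I \<or> j \<notin> I \<longrightarrow> B$i$j = 0" using sup by (metis insert_iff)
      then show ?thesis using insert.IH psd by blast
    next
      case False
      then have dp: "B$k$k > 0" using dpos by simp
      define b where "b = B *v axis k 1"
      have bi: "b$i = B$i$k" for i unfolding b_def by (simp add: matrix_vector_mult_basis column_def)
      define B' where "B' = B - (1 / B$k$k) *\<^sub>R outer b"
      have B'e: "B'$i$j = B$i$j - B$i$k * B$j$k / B$k$k" for i j
        unfolding B'_def outer_def by (simp add: bi)
      have "B'$i$j = B'$j$i" for i j unfolding B'e using sym_entry[OF symB, of i j] by (simp add: mult.commute)
      then have symB': "symmetric_mat B'"
        unfolding symmetric_mat_def by (simp add: vec_eq_iff transpose_def)
      have quadB': "v \<bullet> (B' *v v) \<ge> 0" for v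
      proof -
        define c where "c = (b \<bullet> v) / B$k$k"
        define w where "w = v - c *\<^sub>R axis k 1"
        have e1: "axis k 1 \<bullet> (B *v v) = b \<bullet> v"
          unfolding b_def using sym_inner[OF symB, of "axis k 1" v] by simp
        have e2: "v \<bullet> (B *v axis k 1) = b \<bullet> v" unfolding b_def by (simp add: inner_commute)
        have "0 \<le> w \<bullet> (B *v w)" using psd nonneg_def_mat_def by blast
        also have "\<dots> = v \<bullet> (B *v v) - c * (axis k 1 \<bullet> (B *v v)) - c * (v \<bullet> (B *v axis k 1)) + c * c * B$k$k"
          unfolding w_def by (simp add: matrix_vector_mult_diff_distrib matrix_vector_mult_scaleR inner_diff_left inner_diff_right axis_quad algebra_simps)
        also have "\<dots> = v \<bullet> (B *v v) - (b \<bullet> v) * (b \<bullet> v) / B$k$k"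
          unfolding e1 e2 c_def using dp by (simp add: field_simps)
        also have "\<dots> = v \<bullet> (B' *v v)"
          unfolding B'_def by (simp add: matrix_vector_mult_diff_rdistrib scaleR_matrix_vector_assoc[symmetric] outer_mv inner_diff_right inner_commute)
        finally show ?thesis .
      qed
      have psd': "nonneg_def_mat B'" using symB' quadB' nonneg_def_mat_def by blast
      have sup': "\<forall>i j. i \<notin> I \<or> j \<notin> I \<longrightarrow> B'$i$j = 0"
      proof (intro allI impI)
        fix i j assume "i \<notin> I \<or> j \<notin> I"
        then consider "i = k" | "j = k" | "i \<notin> insert k I" | "j \<notin> insert k I" by auto
        then show "B'$i$j = 0"
        proof cases
          case 1 then show ?thesis using dp sym_entry[OF symB, of j k] by (simp add: B'e)
        next
          case 2 then show ?thesis using dp by (simp add: B'e)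
        next
          case 3 then show ?thesis by (simp add: B'e sup)
        next
          case 4 then show ?thesis by (simp add: B'e sup)
        qed
      qed
      have t1: "trace (A ** B') \<ge> 0" using insert.IH psd' sup' by blast
      have t2: "trace (A ** outer b) \<ge> 0" unfolding trace_outer using A nonneg_def_mat_def by blast
      have "B = B' + (1 / B$k$k) *\<^sub>R outer b" unfolding B'_def by simp
      then have "trace (A ** B) = trace (A ** B') + (1 / B$k$k) * trace (A ** outer b)"
        by (metis matrix_add_ldistrib trace_add mat_scaleR_right trace_scaleR)
      then show ?thesis using t1 t2 dp by simp
    qed
  qed
qed

lemma psd_trace:
  fixes A B :: "real^'n^'n"
  assumes "nonneg_def_mat A" "nonneg_def_mat B"
  shows "trace (A ** B) \<ge> 0"
  using psd_trace_supp[OF assms(1), of UNIV] assms(2) by simp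

lemma inv_props:
  assumes "invertible (A::real^'n^'n)"
  shows "A ** matrix_inv A = mat 1" "matrix_inv A ** A = mat 1"
proof -
  have "\<exists>A'. A ** A' = mat 1 \<and> A' ** A = mat 1" using assms invertible_def by blast
  then have "A ** matrix_inv A = mat 1 \<and> matrix_inv A ** A = mat 1"
    unfolding matrix_inv_def by (rule someI_ex)
  then show "A ** matrix_inv A = mat 1" "matrix_inv A ** A = mat 1" by auto
qed

lemma posdef_invertible:
  assumes "pos_def_mat (A::real^'n^'n)"
  shows "invertible A"
proof -
  have "\<forall>x. A *v x = 0 \<longrightarrow> x = 0"
  proof (intro allI impI)
    fix x assume "A *v x = 0"
    then have "x \<bullet> (A *v x) = 0" by simp
    then show "x = 0" using assms pos_def_mat_def by force
  qed
  then show ?thesis using matrix_left_invertible_ker invertible_left_inverse by blast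
qed

lemma inv_sym:
  assumes "invertible (A::real^'n^'n)" "symmetric_mat A"
  shows "symmetric_mat (matrix_inv A)"
proof -
  let ?B = "matrix_inv A"
  have "transpose ?B ** A = mat 1"
    using inv_props(1)[OF assms(1)] assms(2) by (metis matrix_transpose_mul symmetric_mat_def transpose_mat)
  then have "transpose ?B = transpose ?B ** A ** ?B"
    using inv_props(1)[OF assms(1)] by (metis matrix_mul_assoc matrix_mul_rid)
  also have "\<dots> = ?B" using \<open>transpose ?B ** A = mat 1\<close> by simp
  finally show ?thesis unfolding symmetric_mat_def .
qed

lemma inv_nonneg:
  assumes "pos_def_mat (A::real^'n^'n)"
  shows "nonneg_def_mat (matrix_inv A)"
proof -
  have inv: "invertible A" using posdef_invertible[OF assms] .
  have sA: "symmetric_mat A" using assms pos_def_mat_def by blast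
  have "v \<bullet> (matrix_inv A *v v) \<ge> 0" for v
  proof -
    define w where "w = matrix_inv A *v v"
    have "A *v w = v" unfolding w_def by (simp add: matrix_vector_mul_assoc inv_props[OF inv])
    then have "v \<bullet> (matrix_inv A *v v) = (A *v w) \<bullet> w" using w_def by simp
    also have "\<dots> = w \<bullet> (A *v w)" using sym_inner[OF sA] by simp
    also have "\<dots> \<ge> 0" using assms pos_def_mat_def by (metis order.refl inner_zero_left less_imp_le matrix_vector_mult_0_right)
    finally show ?thesis .
  qed
  then show ?thesis unfolding nonneg_def_mat_def using inv_sym[OF inv sA] by blast
qed

lemma sandwich_nonneg:
  assumes "nonneg_def_mat (A::real^'n^'n)" "symmetric_mat R"
  shows "nonneg_def_mat (R ** A ** R)"
proof -
  have "v \<bullet> ((R ** A ** R) *v v) = (R *v v) \<bullet> (A *v (R *v v))" for v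
    by (metis matrix_vector_mul_assoc sym_inner[OF assms(2)])
  moreover have "symmetric_mat (R ** A ** R)"
    using assms unfolding symmetric_mat_def nonneg_def_mat_def by (simp add: matrix_transpose_mul matrix_mul_assoc)
  ultimately show ?thesis using assms(1) unfolding nonneg_def_mat_def by simp
qed

lemma matrix_add_rdistrib: "((A::real^'n^'m) + B) ** C = A ** C + B ** C"
  by (simp add: matrix_matrix_mult_def vec_eq_iff sum.distrib algebra_simps)
lemma matrix_diff_rdistrib: "((A::real^'n^'m) - B) ** C = A ** C - B ** C"
  by (simp add: matrix_matrix_mult_def vec_eq_iff sum_subtractf algebra_simps)
lemma matrix_diff_ldistrib: "(A::real^'n^'m) ** (B - C) = A ** B - A ** C"
  by (simp add: matrix_matrix_mult_def vec_eq_iff sum_subtractf algebra_simps)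

lemma lin_tr: "linear D \<Longrightarrow> linear (\<lambda>w. trace ((P::real^'n^'n) ** D w))"
  by (rule linearI) (simp_all add: linear_add linear_scale matrix_add_ldistrib trace_add mat_scaleR_right trace_scaleR)

lemma quad_expand:
  fixes D :: "real^'p \<Rightarrow> real^'n^'n"
  assumes lin: "linear D"
  shows "a \<bullet> ((\<chi> k l. trace (X ** D (axis k 1) ** Y ** D (axis l 1))) *v a) = trace (X ** D a ** Y ** D a)"
proof -
  define g where "g u w = trace (X ** D u ** Y ** D w)" for u w
  have l2: "linear (g u)" for u unfolding g_def using lin_tr[OF lin] .
  have g1: "g u w = trace ((Y ** D w ** X) ** D u)" for u w
    unfolding g_def by (metis matrix_mul_assoc trace_mul_sym)
  have l1: "linear (\<lambda>u. g u w)" for w unfolding g1 using lin_tr[OF lin] .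
  have ae: "a = (\<Sum>k\<in>UNIV. a$k *\<^sub>R axis k 1)"
    using basis_expansion[of a] by (simp add: scalar_mult_eq_scaleR)
  have gw: "g a w = (\<Sum>k\<in>UNIV. a$k * g (axis k 1) w)" for w
  proof -
    have "g a w = g (\<Sum>k\<in>UNIV. a$k *\<^sub>R axis k 1) w" by (simp only: ae[symmetric])
    then show ?thesis by (simp add: linear_sum[OF l1] linear_scale[OF l1] o_def)
  qed
  have "g a a = g a (\<Sum>k\<in>UNIV. a$k *\<^sub>R axis k 1)" by (simp only: ae[symmetric])
  also have "\<dots> = (\<Sum>l\<in>UNIV. a$l * g a (axis l 1))"
    by (simp add: linear_sum[OF l2] linear_scale[OF l2] o_def)
  also have "\<dots> = (\<Sum>l\<in>UNIV. a$l * (\<Sum>k\<in>UNIV. a$k * g (axis k 1) (axis l 1)))"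
    by (simp add: gw)
  also have "\<dots> = (\<Sum>k\<in>UNIV. a$k * (\<Sum>l\<in>UNIV. g (axis k 1) (axis l 1) * a$l))"
    by (simp add: sum_distrib_left mult_ac) (subst sum.swap, simp add: mult_ac)
  finally show ?thesis unfolding g_def by (simp add: inner_vec_def matrix_vector_mult_def)
qed

lemma linear_transpose: "linear (transpose :: real^'n^'m \<Rightarrow> real^'m^'n)"
  by (rule linearI) (simp_all add: transpose_def vec_eq_iff)

lemma deriv_sym:
  assumes sym: "\<And>t. symmetric_mat (C t)" and d: "(C has_derivative D) (at \<theta>)"
  shows "symmetric_mat (D u)"
proof -
  have bl: "bounded_linear (transpose :: real^'n^'n \<Rightarrow> real^'n^'n)"
    using linear_transpose linear_conv_bounded_linear by blast
  have "((\<lambda>t. transpose (C t)) has_derivative (\<lambda>u. transpose (D u))) (at \<theta>)"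
    using bounded_linear.has_derivative[OF bl d] .
  then have "(C has_derivative (\<lambda>u. transpose (D u))) (at \<theta>)"
    using sym unfolding symmetric_mat_def by simp
  then have "(\<lambda>u. transpose (D u)) = D" using has_derivative_unique d by blast
  then show ?thesis unfolding symmetric_mat_def by metis
qed

lemma V_posdef:
  fixes C :: "real^'x^'x" and H :: "real^'x^'y"
  assumes pC: "pos_def_mat C" and rk: "rank H = CARD('y)"
  shows "pos_def_mat (H ** C ** transpose H)"
proof -
  have "rank (transpose H) = CARD('y)" using rk rank_transpose by metis
  then have inj: "inj ((*v) (transpose H))" using full_rank_injective by blast
  have sC: "transpose C = C" using pC pos_def_mat_def symmetric_mat_def by blast
  have "v \<bullet> ((H ** C ** transpose H) *v v) > 0" if "v \<noteq> 0" for v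
  proof -
    define w where "w = transpose H *v v"
    have "w \<noteq> 0" using inj that unfolding w_def by (metis injD matrix_vector_mult_0_right)
    then have "w \<bullet> (C *v w) > 0" using pC pos_def_mat_def by blast
    moreover have "v \<bullet> ((H ** C ** transpose H) *v v) = w \<bullet> (C *v w)"
      unfolding w_def by (metis inner_transpose matrix_vector_mul_assoc)
    ultimately show ?thesis by simp
  qed
  moreover have "symmetric_mat (H ** C ** transpose H)"
    unfolding symmetric_mat_def by (simp add: matrix_transpose_mul sC matrix_mul_assoc)
  ultimately show ?thesis unfolding pos_def_mat_def by blast
qed

lemma rot3: "trace ((A::real^'n^'n) ** B ** C) = trace (C ** A ** B)"
  by (metis trace_mul_sym matrix_mul_assoc)

lemma main_ineq:
  fixes C :: "real^'x^'x" and H :: "real^'x^'y" and S :: "real^'x^'x"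
  assumes pC: "pos_def_mat C" and pV: "pos_def_mat (H ** C ** transpose H)" and sS: "symmetric_mat S"
  shows "trace (matrix_inv (H ** C ** transpose H) ** (H ** S ** transpose H) ** matrix_inv (H ** C ** transpose H) ** (H ** S ** transpose H))
         \<le> trace (matrix_inv C ** S ** matrix_inv C ** S)"
proof -
  define V where "V = H ** C ** transpose H"
  define Vi where "Vi = matrix_inv V"
  define Ci where "Ci = matrix_inv C"
  define Q where "Q = transpose H ** Vi ** H"
  define T where "T = C ** Q ** S ** Q ** C"
  define R where "R = S - T"
  have iV: "invertible V" using posdef_invertible pV V_def by blast
  have iC: "invertible C" using posdef_invertible pC by blast
  have ViV: "Vi ** V = mat 1" using inv_props[OF iV] Vi_def by simp
  have CiC: "Ci ** C = mat 1" using inv_props[OF iC] Ci_def by simp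
  have tC: "transpose C = C" using pC pos_def_mat_def symmetric_mat_def by blast
  have tS: "transpose S = S" using sS symmetric_mat_def by blast
  have tVi: "transpose Vi = Vi" using inv_sym[OF iV] pV V_def Vi_def pos_def_mat_def symmetric_mat_def by blast
  have tQ: "transpose Q = Q" unfolding Q_def by (simp add: matrix_transpose_mul tVi matrix_mul_assoc)
  have QCQ: "Q ** C ** Q = Q"
  proof -
    have "Q ** C ** Q = transpose H ** (Vi ** V ** Vi) ** H" by (simp add: Q_def V_def matrix_mul_assoc)
    also have "Vi ** V ** Vi = Vi" using ViV by simp
    finally show ?thesis unfolding Q_def by (simp add: matrix_mul_assoc)
  qed
  have tT: "transpose T = T" unfolding T_def by (simp add: matrix_transpose_mul tC tQ tS matrix_mul_assoc)
  have sR: "symmetric_mat R" unfolding symmetric_mat_def R_def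
    using linear_diff[OF linear_transpose, of S T] tS tT by simp
  have nCi: "nonneg_def_mat Ci" using inv_nonneg[OF pC] Ci_def by simp
  have h0: "0 \<le> trace (Ci ** (R ** Ci ** R))"
    using psd_trace[OF nCi sandwich_nonneg[OF nCi sR]] .
  have CiT: "Ci ** T = Q ** S ** Q ** C"
  proof -
    have "Ci ** T = (Ci ** C) ** Q ** S ** Q ** C" by (simp add: T_def matrix_mul_assoc)
    then show ?thesis using CiC by simp
  qed
  have exp: "Ci ** (R ** Ci ** R) = Ci ** S ** Ci ** S - Ci ** S ** Ci ** T - Ci ** T ** Ci ** S + Ci ** T ** Ci ** T"
    unfolding R_def by (simp add: matrix_diff_ldistrib matrix_diff_rdistrib matrix_add_ldistrib matrix_add_rdistrib matrix_mul_assoc algebra_simps)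
  define W where "W = trace (Q ** S ** Q ** S)"
  have t1: "trace (Ci ** S ** Ci ** T) = W"
  proof -
    have "Ci ** S ** Ci ** T = Ci ** S ** (Ci ** T)" by (simp add: matrix_mul_assoc)
    also have "\<dots> = (Ci ** S ** Q ** S ** Q) ** C" by (simp add: CiT matrix_mul_assoc)
    finally have "trace (Ci ** S ** Ci ** T) = trace (C ** (Ci ** S ** Q ** S ** Q))" using trace_mul_sym by metis
    also have "\<dots> = trace ((C ** Ci) ** S ** Q ** S ** Q)" by (simp add: matrix_mul_assoc)
    also have "C ** Ci = mat 1" using inv_props[OF iC] Ci_def by simp
    also have "trace (mat 1 ** S ** Q ** S ** Q) = trace (S ** (Q ** S ** Q))" by (simp add: matrix_mul_assoc)
    also have "\<dots> = W" unfolding W_def using trace_mul_sym by metis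
    finally show ?thesis .
  qed
  have t2: "trace (Ci ** T ** Ci ** S) = W"
  proof -
    have "Ci ** T ** Ci ** S = Q ** S ** Q ** (C ** Ci) ** S" by (simp add: CiT matrix_mul_assoc)
    also have "C ** Ci = mat 1" using inv_props[OF iC] Ci_def by simp
    finally show ?thesis unfolding W_def by simp
  qed
  have t3: "trace (Ci ** T ** Ci ** T) = W"
  proof -
    have "Ci ** T ** Ci ** T = (Ci ** T) ** (Ci ** T)" by (simp add: matrix_mul_assoc)
    also have "\<dots> = Q ** S ** (Q ** C ** Q) ** S ** Q ** C" by (simp add: CiT matrix_mul_assoc)
    also have "\<dots> = (Q ** S ** Q ** S ** Q) ** C" by (simp add: QCQ matrix_mul_assoc)
    finally have "trace (Ci ** T ** Ci ** T) = trace (C ** (Q ** S ** Q ** S ** Q))" using trace_mul_sym by metis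
    also have "\<dots> = trace ((C ** Q ** S ** Q ** S) ** Q)" by (simp add: matrix_mul_assoc)
    also have "\<dots> = trace (Q ** (C ** Q ** S ** Q ** S))" using trace_mul_sym by metis
    also have "\<dots> = trace ((Q ** C ** Q) ** S ** Q ** S)" by (simp add: matrix_mul_assoc)
    finally show ?thesis unfolding W_def QCQ .
  qed
  have tl: "trace (Vi ** (H ** S ** transpose H) ** Vi ** (H ** S ** transpose H)) = W"
  proof -
    have "trace (Vi ** (H ** S ** transpose H) ** Vi ** (H ** S ** transpose H))
        = trace ((Vi ** H ** S ** transpose H ** Vi ** H ** S) ** transpose H)" by (simp add: matrix_mul_assoc)
    also have "\<dots> = trace (transpose H ** (Vi ** H ** S ** transpose H ** Vi ** H ** S))" using trace_mul_sym by metis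
    also have "\<dots> = W" unfolding W_def Q_def by (simp add: matrix_mul_assoc)
    finally show ?thesis .
  qed
  have "trace (Ci ** (R ** Ci ** R)) = trace (Ci ** S ** Ci ** S) - W"
    unfolding exp trace_add trace_sub t1 t2 t3 by simp
  then show ?thesis using h0 tl unfolding Vi_def V_def Ci_def by simp
qed

lemma tr_swap: "trace ((X::real^'n^'n) ** A ** X ** B) = trace (X ** B ** X ** A)"
proof -
  have "trace (X ** A ** X ** B) = trace ((X ** A) ** (X ** B))" by (simp add: matrix_mul_assoc)
  also have "\<dots> = trace ((X ** B) ** (X ** A))" by (rule trace_mul_sym)
  finally show ?thesis by (simp add: matrix_mul_assoc)
qed

lemma lin_sand: "linear D \<Longrightarrow> linear (\<lambda>u. (H::real^'x^'y) ** D u ** transpose H)"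
  by (rule linearI) (simp_all add: linear_add linear_scale matrix_add_ldistrib matrix_add_rdistrib mat_scaleR_right scalar_matrix_assoc[symmetric])

theorem proposition13p1:
  fixes C :: "real^'p \<Rightarrow> real^'x^'x"
    and H :: "real^'x^'y"
    and \<theta> :: "real^'p"
    and D :: "real^'p \<Rightarrow> real^'x^'x"
  assumes dim: "CARD('y) \<le> CARD('x)"
    and posdef: "\<And>t. pos_def_mat (C t)"
    and diff: "\<And>t. C differentiable (at t)"
    and deriv: "(C has_derivative D) (at \<theta>)"
    and rk: "rank H = CARD('y)"
  shows "let V = H ** C \<theta> ** transpose H;
             lhs = (\<chi> k l. trace (matrix_inv V ** (H ** partial_mat D k ** transpose H)
                                  ** matrix_inv V ** (H ** partial_mat D l ** transpose H)));
             rhs = (\<chi> k l. trace (matrix_inv (C \<theta>) ** partial_mat D k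
                                  ** matrix_inv (C \<theta>) ** partial_mat D l))
         in loewner_le lhs rhs"
proof -
  define V where "V = H ** C \<theta> ** transpose H"
  define Vi where "Vi = matrix_inv V"
  define Ci where "Ci = matrix_inv (C \<theta>)"
  define lhs where "lhs = (\<chi> k l. trace (Vi ** (H ** D (axis k 1) ** transpose H) ** Vi ** (H ** D (axis l 1) ** transpose H)))"
  define rhs where "rhs = (\<chi> k l. trace (Ci ** D (axis k 1) ** Ci ** D (axis l 1)))"
  have lin: "linear D" using has_derivative_linear[OF deriv] .
  have symD: "symmetric_mat (D u)" for u
    using deriv_sym[OF _ deriv] posdef pos_def_mat_def by blast
  have pV: "pos_def_mat V" unfolding V_def using V_posdef[OF posdef rk] .
  have sl: "symmetric_mat lhs" unfolding symmetric_mat_def lhs_def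
    by (simp add: vec_eq_iff transpose_def tr_swap[of Vi])
  have sr: "symmetric_mat rhs" unfolding symmetric_mat_def rhs_def
    by (simp add: vec_eq_iff transpose_def tr_swap[of Ci])
  have "a \<bullet> ((rhs - lhs) *v a) \<ge> 0" for a
  proof -
    have ql: "a \<bullet> (lhs *v a) = trace (Vi ** (H ** D a ** transpose H) ** Vi ** (H ** D a ** transpose H))"
      unfolding lhs_def using quad_expand[OF lin_sand[OF lin, of H], of a Vi Vi] by simp
    have qr: "a \<bullet> (rhs *v a) = trace (Ci ** D a ** Ci ** D a)"
      unfolding rhs_def using quad_expand[OF lin, of a Ci Ci] by simp
    have "trace (Vi ** (H ** D a ** transpose H) ** Vi ** (H ** D a ** transpose H)) \<le> trace (Ci ** D a ** Ci ** D a)"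
      using main_ineq[OF posdef pV[unfolded V_def] symD[of a]] unfolding Vi_def V_def Ci_def .
    then show ?thesis by (simp add: matrix_vector_mult_diff_rdistrib inner_diff_right ql qr)
  qed
  moreover have "symmetric_mat (rhs - lhs)"
    using sl sr linear_diff[OF linear_transpose, of rhs lhs] unfolding symmetric_mat_def by simp
  ultimately have "loewner_le lhs rhs" unfolding loewner_le_def nonneg_def_mat_def using sl sr by blast
  then show ?thesis unfolding Let_def lhs_def rhs_def Vi_def V_def Ci_def partial_mat_def .
qed

end
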